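(* There exist constants $C>0$ and $n_0$ such that for every $n\ge n_0$ and every assignment $x:V\to\{-1,1\}$ with $x_{-\mathbf v}=-x_{\mathbf v}$ for all $\mathbf v\in V$, the total weight of clauses of $\Phi_n$ satisfied by $x$ is at most $\frac{3(\sqrt{21}-4)}{2}+\frac{C}{n}$.
   Context: Let $\mathbf e_1,\dots,\mathbf e_n$ be the standard basis of $\mathbb R^n$ and $V=\{\frac{1}{\sqrt3}(b_1\mathbf e_i+b_2\mathbf e_j+b_3\mathbf e_k): b_1,b_2,b_3\in\{-1,1\},\ 1\le i<j<k\le n\}$. To each $\mathbf v\in V$ associate a Boolean variable $x_{\mathbf v}\in\{-1,1\}$, with the identification $x_{-\mathbf v}=-x_{\mathbf v}$. $\mathrm{NAE}(y_1,\dots,y_k)$ is satisfied iff not all $y_i$ are equal. $\mathcal C_3$ is the set of clauses $\mathrm{NAE}(x_{\mathbf v_1},x_{\mathbf v_2},x_{\mathbf v_3})$ with $\mathbf v_1=\frac{1}{\sqrt3}(s_1\mathbf e_{i_1}-s_2\mathbf e_{i_2}+s_4\mathbf e_{i_4})$, $\mathbf v_2=\frac{1}{\sqrt3}(s_2\mathbf e_{i_2}-s_3\mathbf e_{i_3}+s_5\mathbf e_{i_5})$, $\mathbf v_3=\frac{1}{\sqrt3}(s_3\mathbf e_{i_3}-s_1\mathbf e_{i_1}+s_6\mathbf e_{i_6})$ for distinct indices $i_1,\dots,i_6\in[n]$ and signs $s_1,\dots,s_6\in\{-1,1\}$. $\mathcal C_5$ is the set of clauses $\mathrm{NAE}(x_{\mathbf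 v_1},\dots,x_{\mathbf v_5})$ with $\mathbf v_j=\frac{1}{\sqrt3}(s_1\mathbf e_{i_1}+s_{2j}\mathbf e_{i_{2j}}+s_{2j+1}\mathbf e_{i_{2j+1}})$ for $j\in\{1,2,3,4\}$ and $\mathbf v_5=\frac{1}{\sqrt3}(s_{10}\mathbf e_{i_{10}}+s_{11}\mathbf e_{i_{11}}+s_{12}\mathbf e_{i_{12}})$ for distinct indices $i_1,\dots,i_{12}\in[n]$ and signs $s_1,\dots,s_{12}\in\{-1,1\}$. $\Phi_n$ is the MAX NAE-SAT instance on variables $\{x_{\mathbf v}\}$ with clause set $\mathcal C_3\cup\mathcal C_5$, where each clause of $\mathcal C_3$ has weight $\frac{1-3/\sqrt{21}}{|\mathcal C_3|}$ and each clause of $\mathcal C_5$ has weight $\frac{3}{\sqrt{21}\,|\mathcal C_5|}$ (total weight $1$). *)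

theory Defs
  imports Complex_Main
begin

text \<open>Vectors of R^n are represented as functions nat => real (coordinates 1..n,
  zero elsewhere). ind i is the standard basis vector e_i.\<close>

definition ind :: "nat \<Rightarrow> nat \<Rightarrow> real" where
  "ind i = (\<lambda>t. if t = i then 1 else 0)"

definition vec3 :: "real \<Rightarrow> nat \<Rightarrow> real \<Rightarrow> nat \<Rightarrow> real \<Rightarrow> nat \<Rightarrow> (nat \<Rightarrow> real)" where
  "vec3 a i b j c k = (\<lambda>t. (a * ind i t + b * ind j t + c * ind k t) / sqrt 3)"

definition Vset :: "nat \<Rightarrow> (nat \<Rightarrow> real) set" where
  "Vset n = {v. \<exists>i j k b1 b2 b3. 1 \<le> i \<and> i < j \<and> j < k \<and> k \<le> n \<and>
      b1 \<in> {-1, 1} \<and> b2 \<in> {-1, 1} \<and> b3 \<in> {-1, 1} \<and> v = vec3 b1 i b2 j b3 k}"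

definition NAE :: "real list \<Rightarrow> bool" where
  "NAE ys \<longleftrightarrow> \<not> (\<forall>y \<in> set ys. y = hd ys)"

definition params :: "nat \<Rightarrow> nat \<Rightarrow> (nat \<Rightarrow> nat) \<Rightarrow> (nat \<Rightarrow> real) \<Rightarrow> bool" where
  "params n m i s \<longleftrightarrow> inj_on i {1..m} \<and> i ` {1..m} \<subseteq> {1..n} \<and> (\<forall>k\<in>{1..m}. s k \<in> {-1, 1})"

text \<open>A clause is recorded as the (ordered) list of the vectors whose variables it contains.\<close>
definition C3 :: "nat \<Rightarrow> (nat \<Rightarrow> real) list set" where
  "C3 n = {[vec3 (s 1) (i 1) (- s 2) (i 2) (s 4) (i 4),
            vec3 (s 2) (i 2) (- s 3) (i 3) (s 5) (i 5),
            vec3 (s 3) (i 3) (- s 1) (i 1) (s 6) (i 6)] | i s. params n 6 i s}"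

definition C5 :: "nat \<Rightarrow> (nat \<Rightarrow> real) list set" where
  "C5 n = {map (\<lambda>j. vec3 (s 1) (i 1) (s (2*j)) (i (2*j)) (s (2*j+1)) (i (2*j+1))) [1,2,3,4]
           @ [vec3 (s 10) (i 10) (s 11) (i 11) (s 12) (i 12)] | i s. params n 12 i s}"

definition sat_weight :: "nat \<Rightarrow> ((nat \<Rightarrow> real) \<Rightarrow> real) \<Rightarrow> real" where
  "sat_weight n x =
     (\<Sum>c\<in>C3 n. if NAE (map x c) then (1 - 3 / sqrt 21) / real (card (C3 n)) else 0)
   + (\<Sum>c\<in>C5 n. if NAE (map x c) then 3 / (sqrt 21 * real (card (C5 n))) else 0)"

end

theory Submission
  imports Defs "HOL-Library.FuncSet"
begin


definition SS :: "nat \<Rightarrow> (nat \<times> real) set" where "SS n = {1..n} \<times> {-1,1}"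
definition VV :: "nat \<times> real \<Rightarrow> nat \<times> real \<Rightarrow> nat \<times> real \<Rightarrow> (nat \<Rightarrow> real)" where
  "VV a b c = vec3 (snd a) (fst a) (snd b) (fst b) (snd c) (fst c)"
definition ng :: "nat \<times> real \<Rightarrow> nat \<times> real" where "ng a = (fst a, - snd a)"
definition XX :: "((nat \<Rightarrow> real) \<Rightarrow> real) \<Rightarrow> nat \<times> real \<Rightarrow> nat \<times> real \<Rightarrow> nat \<times> real \<Rightarrow> real" where
  "XX x a b c = (if fst a \<noteq> fst b \<and> fst a \<noteq> fst c \<and> fst b \<noteq> fst c then x (VV a b c) else 0)"

lemma sum_PiE_insert:
  assumes "k \<notin> J" "finite J" "\<And>j. finite (B j)"
  shows "(\<Sum>f\<in>PiE (insert k J) B. G f) = (\<Sum>y\<in>B k. \<Sum>f\<in>PiE J B. G (f(k := y)))"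
proof -
  have "(\<Sum>f\<in>PiE (insert k J) B. G f) = (\<Sum>f\<in>(\<lambda>(y, g). g(k := y)) ` (B k \<times> Pi\<^sub>E J B). G f)"
    by (simp add: PiE_insert_eq)
  also have "\<dots> = (\<Sum>p\<in>B k \<times> Pi\<^sub>E J B. G ((\<lambda>(y, g). g(k := y)) p))"
    by (rule sum.reindex[OF inj_combinator[OF assms(1)], unfolded comp_def])
  also have "\<dots> = (\<Sum>(y,f)\<in>B k \<times> Pi\<^sub>E J B. G (f(k := y)))"
    by (simp add: case_prod_unfold)
  also have "\<dots> = (\<Sum>y\<in>B k. \<Sum>f\<in>PiE J B. G (f(k := y)))"
    by (rule sum.cartesian_product[symmetric])
  finally show ?thesis .
qed

lemma fst_ng[simp]: "fst (ng a) = fst a" by (simp add: ng_def)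
lemma snd_ng[simp]: "snd (ng a) = - snd a" by (simp add: ng_def)
lemma ng_ng[simp]: "ng (ng a) = a" by (simp add: ng_def)
lemma ng_SS: "a \<in> SS n \<Longrightarrow> ng a \<in> SS n" by (auto simp: SS_def ng_def)

lemma vec3_swap12: "vec3 a i b j c k = vec3 b j a i c k"
  unfolding vec3_def by (simp add: algebra_simps)
lemma vec3_swap23: "vec3 a i b j c k = vec3 a i c k b j"
  unfolding vec3_def by (simp add: algebra_simps)

lemma VV_swap12: "VV a b c = VV b a c" unfolding VV_def using vec3_swap12 by simp
lemma VV_swap23: "VV a b c = VV a c b" unfolding VV_def using vec3_swap23 by simp
lemma VV_ng: "VV (ng a) (ng b) (ng c) = (\<lambda>t. - VV a b c t)"
  unfolding VV_def ng_def vec3_def by (simp add: fun_eq_iff field_simps)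

lemma vec3_in_Vset_sorted:
  "1 \<le> i \<Longrightarrow> i < j \<Longrightarrow> j < k \<Longrightarrow> k \<le> n \<Longrightarrow> a \<in> {-1,1} \<Longrightarrow> b \<in> {-1,1} \<Longrightarrow> c \<in> {-1,1}
   \<Longrightarrow> vec3 a i b j c k \<in> Vset n"
  unfolding Vset_def by blast

lemma VV_in_Vset:
  assumes "a \<in> SS n" "b \<in> SS n" "c \<in> SS n" "fst a \<noteq> fst b" "fst a \<noteq> fst c" "fst b \<noteq> fst c"
  shows "VV a b c \<in> Vset n"
proof -
  obtain i s where a: "a = (i, s)" by force
  obtain j t where b: "b = (j, t)" by force
  obtain k u where c: "c = (k, u)" by force
  have h: "1 \<le> i" "i \<le> n" "1 \<le> j" "j \<le> n" "1 \<le> k" "k \<le> n" "s \<in> {-1,1}" "t \<in> {-1,1}" "u \<in> {-1,1}"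
    "i \<noteq> j" "i \<noteq> k" "j \<noteq> k"
    using assms unfolding a b c SS_def by auto
  have "vec3 s i t j u k \<in> Vset n"
  proof (cases "i < j")
    case True
    then show ?thesis
    proof (cases "j < k")
      case True then show ?thesis using h \<open>i<j\<close> vec3_in_Vset_sorted by simp
    next
      case False
      then show ?thesis
      proof (cases "i < k")
        case True
        then show ?thesis using h \<open>i<j\<close> \<open>\<not> j<k\<close> vec3_in_Vset_sorted[of i k j n s u t] vec3_swap23 by simp
      next
        case False
        then show ?thesis using h \<open>i<j\<close> \<open>\<not> j<k\<close> vec3_in_Vset_sorted[of k i j n u s t]
          by (metis vec3_swap12 vec3_swap23 linorder_neqE_nat)
      qed
    qed
  next
    case False
    then show ?thesis
    proof (cases "i < k")
      case True then show ?thesis using h \<open>\<not> i<j\<close> vec3_in_Vset_sorted[of j i k n t s u] vec3_swap12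
        by (metis linorder_neqE_nat)
    next
      case False
      then show ?thesis
      proof (cases "j < k")
        case True then show ?thesis using h \<open>\<not> i<j\<close> \<open>\<not> i<k\<close> vec3_in_Vset_sorted[of j k i n t u s]
          by (metis vec3_swap12 vec3_swap23 linorder_neqE_nat)
      next
        case False then show ?thesis using h \<open>\<not> i<j\<close> \<open>\<not> i<k\<close> vec3_in_Vset_sorted[of k j i n u t s]
          by (metis vec3_swap12 vec3_swap23 linorder_neqE_nat)
      qed
    qed
  qed
  then show ?thesis unfolding VV_def a b c by simp
qed

locale asg =
  fixes n :: nat and x :: "(nat \<Rightarrow> real) \<Rightarrow> real"
  assumes xv: "\<forall>v \<in> Vset n. x v \<in> {-1, 1} \<and> x (\<lambda>t. - v t) = - x v"
begin

lemma XX_swap12: "XX x a b c = XX x b a c"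
  unfolding XX_def using VV_swap12 by auto

lemma XX_ng: assumes "a \<in> SS n" "b \<in> SS n" "c \<in> SS n"
  shows "XX x (ng a) (ng b) (ng c) = - XX x a b c"
  using VV_in_Vset[OF assms] xv unfolding XX_def by (auto simp: VV_ng fst_ng)

lemma XX_pm: assumes "a \<in> SS n" "b \<in> SS n" "c \<in> SS n" "fst a \<noteq> fst b" "fst a \<noteq> fst c" "fst b \<noteq> fst c"
  shows "XX x a b c \<in> {-1,1}"
  using VV_in_Vset[OF assms] xv assms unfolding XX_def by auto

lemma XX_bd: assumes "a \<in> SS n" "b \<in> SS n" "c \<in> SS n"
  shows "\<bar>XX x a b c\<bar> \<le> 1"
  using XX_pm[OF assms] unfolding XX_def by (cases "fst a \<noteq> fst b \<and> fst a \<noteq> fst c \<and> fst b \<noteq> fst c") auto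


definition DS :: "nat \<times> real \<Rightarrow> real" where "DS a = (\<Sum>b\<in>SS n. \<Sum>c\<in>SS n. XX x a b c)"

lemma fin_SS[simp]: "finite (SS n)" by (simp add: SS_def)

lemma sum_ng: "(\<Sum>b\<in>SS n. f (ng b)) = (\<Sum>b\<in>SS n. f b)"
  by (rule sum.reindex_bij_witness[where i=ng and j=ng]) (auto simp: ng_SS)

lemma DS_ng: assumes "a \<in> SS n" shows "DS (ng a) = - DS a"
proof -
  have "DS (ng a) = (\<Sum>b\<in>SS n. \<Sum>c\<in>SS n. XX x (ng a) (ng b) (ng c))"
    unfolding DS_def
    apply (rule trans[OF sum_ng[symmetric, where f="\<lambda>b. \<Sum>c\<in>SS n. XX x (ng a) b c"]])
    apply (rule sum.cong[OF refl])
    apply (rule sum_ng[symmetric, where f="\<lambda>c. XX x (ng a) (ng b) c" for b])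
    done
  also have "\<dots> = - DS a" unfolding DS_def using assms
    by (simp add: XX_ng ng_SS sum_negf)
  finally show ?thesis .
qed

lemma sum_DS: "(\<Sum>a\<in>SS n. DS a) = 0"
proof -
  have "(\<Sum>a\<in>SS n. DS a) = (\<Sum>a\<in>SS n. DS (ng a))" by (simp add: sum_ng)
  also have "\<dots> = - (\<Sum>a\<in>SS n. DS a)" by (simp add: DS_ng sum_negf)
  finally show ?thesis by simp
qed

lemma DS_c1: assumes "a \<in> SS n" shows "(\<Sum>b\<in>SS n. \<Sum>c\<in>SS n. XX x b (ng a) c) = - DS a"
proof -
  have "(\<Sum>b\<in>SS n. \<Sum>c\<in>SS n. XX x b (ng a) c) = DS (ng a)"
    unfolding DS_def by (simp add: XX_swap12[of b "ng a" for b])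
  then show ?thesis using DS_ng assms by simp
qed

lemma DS_c2: "(\<Sum>b\<in>SS n. \<Sum>c\<in>SS n. XX x a (ng b) c) = DS a"
  unfolding DS_def by (rule sum_ng)

definition AA :: "nat \<Rightarrow> (nat \<Rightarrow> nat \<times> real) set" where "AA m = PiE {1..m} (\<lambda>_. SS n)"

lemma nest5: "(\<Sum>a\<in>S. \<Sum>b\<in>S. \<Sum>c\<in>S. \<Sum>d\<in>S. \<Sum>e\<in>S. (P a b c * Q a d e :: real)) =
   (\<Sum>a\<in>S. (\<Sum>b\<in>S. \<Sum>c\<in>S. P a b c) * (\<Sum>d\<in>S. \<Sum>e\<in>S. Q a d e))"
  by (simp only: sum_distrib_right) (simp only: sum_distrib_left)

lemma sumA3_12: "(\<Sum>f\<in>AA 6. XX x (f 1) (ng (f 2)) (f 4) * XX x (f 2) (ng (f 3)) (f 5))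
   = - real (card (SS n)) * (\<Sum>a\<in>SS n. (DS a)^2)"
proof -
  have e: "{1..6::nat} = insert 2 (insert 1 (insert 4 (insert 3 (insert 5 (insert 6 {})))))" by auto
  have "(\<Sum>f\<in>AA 6. XX x (f 1) (ng (f 2)) (f 4) * XX x (f 2) (ng (f 3)) (f 5))
     = (\<Sum>a\<in>SS n. \<Sum>b\<in>SS n. \<Sum>c\<in>SS n. \<Sum>d\<in>SS n. \<Sum>e\<in>SS n. \<Sum>g\<in>SS n.
            XX x b (ng a) c * XX x a (ng d) e)"
    unfolding AA_def e by (simp add: sum_PiE_insert card_PiE)
  also have "\<dots> = real (card (SS n)) * (\<Sum>a\<in>SS n. \<Sum>b\<in>SS n. \<Sum>c\<in>SS n. \<Sum>d\<in>SS n. \<Sum>e\<in>SS n.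
            XX x b (ng a) c * XX x a (ng d) e)"
    by (simp add: sum_distrib_left)
  also have "\<dots> = real (card (SS n)) * (\<Sum>a\<in>SS n. (- DS a) * DS a)"
    by (simp only: nest5 DS_c1 DS_c2 cong: sum.cong)
  finally show ?thesis by (simp add: power2_eq_square sum_negf)
qed


lemma sumA3_23: "(\<Sum>f\<in>AA 6. XX x (f 2) (ng (f 3)) (f 5) * XX x (f 3) (ng (f 1)) (f 6))
   = - real (card (SS n)) * (\<Sum>a\<in>SS n. (DS a)^2)"
proof -
  have e: "{1..6::nat} = insert 3 (insert 2 (insert 5 (insert 1 (insert 6 (insert 4 {})))))" by auto
  have "(\<Sum>f\<in>AA 6. XX x (f 2) (ng (f 3)) (f 5) * XX x (f 3) (ng (f 1)) (f 6))
     = (\<Sum>a\<in>SS n. \<Sum>b\<in>SS n. \<Sum>c\<in>SS n. \<Sum>d\<in>SS n. \<Sum>e\<in>SS n.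
            real (card (SS n)) * (XX x b (ng a) c * XX x a (ng d) e))"
    unfolding AA_def e by (simp add: sum_PiE_insert card_PiE)
  also have "\<dots> = real (card (SS n)) * (\<Sum>a\<in>SS n. \<Sum>b\<in>SS n. \<Sum>c\<in>SS n. \<Sum>d\<in>SS n. \<Sum>e\<in>SS n.
            XX x b (ng a) c * XX x a (ng d) e)"
    by (simp add: sum_distrib_left)
  also have "\<dots> = real (card (SS n)) * (\<Sum>a\<in>SS n. (- DS a) * DS a)"
    by (simp only: nest5 DS_c1 DS_c2 cong: sum.cong)
  finally show ?thesis by (simp add: power2_eq_square sum_negf)
qed

lemma sumA3_31: "(\<Sum>f\<in>AA 6. XX x (f 3) (ng (f 1)) (f 6) * XX x (f 1) (ng (f 2)) (f 4))
   = - real (card (SS n)) * (\<Sum>a\<in>SS n. (DS a)^2)"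
proof -
  have e: "{1..6::nat} = insert 1 (insert 3 (insert 6 (insert 2 (insert 4 (insert 5 {})))))" by auto
  have "(\<Sum>f\<in>AA 6. XX x (f 3) (ng (f 1)) (f 6) * XX x (f 1) (ng (f 2)) (f 4))
     = (\<Sum>a\<in>SS n. \<Sum>b\<in>SS n. \<Sum>c\<in>SS n. \<Sum>d\<in>SS n. \<Sum>e\<in>SS n.
            real (card (SS n)) * (XX x b (ng a) c * XX x a (ng d) e))"
    unfolding AA_def e by (simp add: sum_PiE_insert card_PiE)
  also have "\<dots> = real (card (SS n)) * (\<Sum>a\<in>SS n. \<Sum>b\<in>SS n. \<Sum>c\<in>SS n. \<Sum>d\<in>SS n. \<Sum>e\<in>SS n.
            XX x b (ng a) c * XX x a (ng d) e)"
    by (simp add: sum_distrib_left)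
  also have "\<dots> = real (card (SS n)) * (\<Sum>a\<in>SS n. (- DS a) * DS a)"
    by (simp only: nest5 DS_c1 DS_c2 cong: sum.cong)
  finally show ?thesis by (simp add: power2_eq_square sum_negf)
qed

lemma card_AA: "card (AA m) = card (SS n) ^ m"
  unfolding AA_def by (simp add: card_PiE)

lemma fin_AA[simp]: "finite (AA m)"
  unfolding AA_def by (simp add: finite_PiE)

definition F3 :: "(nat \<Rightarrow> nat \<times> real) \<Rightarrow> real" where
  "F3 f = (1 + XX x (f 1) (ng (f 2)) (f 4) * XX x (f 2) (ng (f 3)) (f 5)
             + XX x (f 2) (ng (f 3)) (f 5) * XX x (f 3) (ng (f 1)) (f 6)
             + XX x (f 3) (ng (f 1)) (f 6) * XX x (f 1) (ng (f 2)) (f 4)) / 4"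

lemma sumF3: "(\<Sum>f\<in>AA 6. F3 f) = (real (card (SS n)) ^ 6 - 3 * real (card (SS n)) * (\<Sum>a\<in>SS n. (DS a)^2)) / 4"
proof -
  have "(\<Sum>f\<in>AA 6. F3 f) = ((\<Sum>f\<in>AA 6. 1) + (\<Sum>f\<in>AA 6. XX x (f 1) (ng (f 2)) (f 4) * XX x (f 2) (ng (f 3)) (f 5))
             + (\<Sum>f\<in>AA 6. XX x (f 2) (ng (f 3)) (f 5) * XX x (f 3) (ng (f 1)) (f 6))
             + (\<Sum>f\<in>AA 6. XX x (f 3) (ng (f 1)) (f 6) * XX x (f 1) (ng (f 2)) (f 4))) / 4"
    by (simp only: F3_def sum_divide_distrib[symmetric] sum.distrib)
  also have "\<dots> = (real (card (SS n)) ^ 6 - 3 * real (card (SS n)) * (\<Sum>a\<in>SS n. (DS a)^2)) / 4"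
    by (simp only: sumA3_12 sumA3_23 sumA3_31) (simp add: card_AA)
  finally show ?thesis .
qed

lemma nest12: "(\<Sum>a\<in>S. \<Sum>b2\<in>S. \<Sum>b3\<in>S. \<Sum>b4\<in>S. \<Sum>b5\<in>S. \<Sum>b6\<in>S. \<Sum>b7\<in>S. \<Sum>b8\<in>S. \<Sum>b9\<in>S.
     \<Sum>b10\<in>S. \<Sum>b11\<in>S. \<Sum>b12\<in>S.
     (P a b2 b3 * (Q a b4 b5 * (R a b6 b7 * (T a b8 b9 * U b10 b11 b12))) :: real)) =
   (\<Sum>a\<in>S. (\<Sum>b\<in>S. \<Sum>c\<in>S. P a b c) * ((\<Sum>b\<in>S. \<Sum>c\<in>S. Q a b c) * ((\<Sum>b\<in>S. \<Sum>c\<in>S. R a b c)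
     * ((\<Sum>b\<in>S. \<Sum>c\<in>S. T a b c) * (\<Sum>b\<in>S. \<Sum>c\<in>S. \<Sum>d\<in>S. U b c d)))))"
  by (simp only: sum_distrib_right) (simp only: sum_distrib_left)

lemma pair_sum: "(\<Sum>b\<in>SS n. \<Sum>c\<in>SS n. 1 + e * XX x a b c) = real (card (SS n))^2 + e * DS a"
  unfolding DS_def by (simp add: sum.distrib sum_distrib_left power2_eq_square)

lemma triple_sum: "(\<Sum>a\<in>SS n. \<Sum>b\<in>SS n. \<Sum>c\<in>SS n. 1 + e * XX x a b c) = real (card (SS n))^3"
proof -
  have "(\<Sum>a\<in>SS n. \<Sum>b\<in>SS n. \<Sum>c\<in>SS n. 1 + e * XX x a b c) = (\<Sum>a\<in>SS n. real (card (SS n))^2 + e * DS a)"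
    by (simp only: pair_sum)
  also have "\<dots> = real (card (SS n))^3 + e * (\<Sum>a\<in>SS n. DS a)"
    by (simp add: sum.distrib sum_distrib_left power3_eq_cube power2_eq_square)
  finally show ?thesis by (simp add: sum_DS)
qed

definition P5 :: "real \<Rightarrow> (nat \<Rightarrow> nat \<times> real) \<Rightarrow> real" where
  "P5 e f = (1 + e * XX x (f 1) (f 2) (f 3)) * ((1 + e * XX x (f 1) (f 4) (f 5)) * ((1 + e * XX x (f 1) (f 6) (f 7))
     * ((1 + e * XX x (f 1) (f 8) (f 9)) * (1 + e * XX x (f 10) (f 11) (f 12)))))"

lemma sumP5: "(\<Sum>f\<in>AA 12. P5 e f) = real (card (SS n))^3 * (\<Sum>a\<in>SS n. (real (card (SS n))^2 + e * DS a)^4)"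
proof -
  have e: "{1..12::nat} = insert 1 (insert 2 (insert 3 (insert 4 (insert 5 (insert 6 (insert 7 (insert 8 (insert 9
     (insert 10 (insert 11 (insert 12 {})))))))))))"
    by (rule set_eqI) (simp only: atLeastAtMost_iff insert_iff empty_iff; arith)
  have "(\<Sum>f\<in>AA 12. P5 e f) = (\<Sum>a\<in>SS n. \<Sum>b2\<in>SS n. \<Sum>b3\<in>SS n. \<Sum>b4\<in>SS n. \<Sum>b5\<in>SS n. \<Sum>b6\<in>SS n. \<Sum>b7\<in>SS n. \<Sum>b8\<in>SS n. \<Sum>b9\<in>SS n.
     \<Sum>b10\<in>SS n. \<Sum>b11\<in>SS n. \<Sum>b12\<in>SS n.
     (1 + e * XX x a b2 b3) * ((1 + e * XX x a b4 b5) * ((1 + e * XX x a b6 b7)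
     * ((1 + e * XX x a b8 b9) * (1 + e * XX x b10 b11 b12)))))"
    unfolding AA_def e P5_def by (simp add: sum_PiE_insert)
  also have "\<dots> = (\<Sum>a\<in>SS n. (real (card (SS n))^2 + e * DS a) * ((real (card (SS n))^2 + e * DS a) *
     ((real (card (SS n))^2 + e * DS a) * ((real (card (SS n))^2 + e * DS a) * real (card (SS n))^3))))"
    by (simp only: nest12 triple_sum) (simp only: pair_sum)
  finally show ?thesis by (simp add: sum_distrib_left power4_eq_xxxx mult_ac)
qed


end


context asg begin
definition DD :: "nat \<Rightarrow> (nat \<Rightarrow> nat \<times> real) set" where
  "DD m = {f \<in> AA m. inj_on (\<lambda>k. fst (f k)) {1..m}}"

lemma card_SS: "card (SS n) = 2 * n"
proof -
  have "card (SS n) = card {1..n} * card {-1,1::real}" unfolding SS_def by (rule card_cartesian_product)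
  then show ?thesis by simp
qed

lemma count_fst: assumes "i \<in> {1..n}" shows "(\<Sum>y\<in>SS n. of_bool (fst y = i) :: real) = 2"
proof -
  have "(\<Sum>y\<in>SS n. of_bool (fst y = i) :: real) = real (card {y\<in>SS n. fst y = i})"
    by (simp add: sum.If_cases Int_def)
  also have "{y\<in>SS n. fst y = i} = {(i,-1),(i,1)}" using assms unfolding SS_def by auto
  finally show ?thesis by simp
qed

lemma count_eq: assumes "k \<in> {1..m}" "l \<in> {1..m}" "k \<noteq> l"
  shows "(\<Sum>f\<in>AA m. of_bool (fst (f k) = fst (f l)) :: real) = 2 * real (card (SS n)) ^ (m - 1)"
proof -
  have I: "{1..m} = insert l ({1..m} - {l})" using assms by auto
  have "(\<Sum>f\<in>AA m. of_bool (fst (f k) = fst (f l)) :: real)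
     = (\<Sum>y\<in>SS n. \<Sum>f\<in>PiE ({1..m} - {l}) (\<lambda>_. SS n). of_bool (fst ((f(l:=y)) k) = fst ((f(l:=y)) l)))"
  proof -
    have A: "AA m = PiE (insert l ({1..m} - {l})) (\<lambda>_. SS n)" unfolding AA_def by (simp only: I[symmetric])
    show ?thesis unfolding A by (rule sum_PiE_insert) simp_all
  qed
  also have "\<dots> = (\<Sum>y\<in>SS n. \<Sum>f\<in>PiE ({1..m} - {l}) (\<lambda>_. SS n). of_bool (fst y = fst (f k)))"
    using assms by (intro sum.cong refl) auto
  also have "\<dots> = (\<Sum>f\<in>PiE ({1..m} - {l}) (\<lambda>_. SS n). \<Sum>y\<in>SS n. of_bool (fst y = fst (f k)))"
    by (rule sum.swap)
  also have "\<dots> = (\<Sum>f\<in>PiE ({1..m} - {l}) (\<lambda>_. SS n). 2)"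
  proof (rule sum.cong[OF refl])
    fix f assume "f \<in> PiE ({1..m} - {l}) (\<lambda>_. SS n)"
    from PiE_mem[OF this, of k] assms have "f k \<in> SS n" by simp
    then have "fst (f k) \<in> {1..n}" unfolding SS_def by auto
    then show "(\<Sum>y\<in>SS n. of_bool (fst y = fst (f k)) :: real) = 2" by (rule count_fst)
  qed
  also have "\<dots> = 2 * real (card (SS n)) ^ (m - 1)"
    using assms by (simp add: card_PiE)
  finally show ?thesis .
qed

lemma nonD: "real (card (AA m - DD m)) \<le> 2 * real m ^ 2 * real (card (SS n)) ^ (m - 1)"
proof -
  have sub: "DD m \<subseteq> AA m" unfolding DD_def by auto
  have "real (card (AA m - DD m)) = (\<Sum>f\<in>AA m. of_bool (f \<notin> DD m))"
    by (simp add: sum.If_cases Diff_eq Compl_eq)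
  also have "\<dots> \<le> (\<Sum>f\<in>AA m. \<Sum>k\<in>{1..m}. \<Sum>l\<in>{1..m}-{k}. of_bool (fst (f k) = fst (f l)))"
  proof (rule sum_mono)
    fix f assume f: "f \<in> AA m"
    show "of_bool (f \<notin> DD m) \<le> (\<Sum>k\<in>{1..m}. \<Sum>l\<in>{1..m}-{k}. of_bool (fst (f k) = fst (f l)) :: real)"
    proof (cases "f \<in> DD m")
      case True then show ?thesis by (simp add: sum_nonneg)
    next
      case False
      then obtain k l where kl: "k \<in> {1..m}" "l \<in> {1..m}" "k \<noteq> l" "fst (f k) = fst (f l)"
        using f unfolding DD_def inj_on_def by auto
      have "(of_bool (fst (f k) = fst (f l)) :: real) \<le> (\<Sum>l\<in>{1..m}-{k}. of_bool (fst (f k) = fst (f l)))"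
        by (rule member_le_sum) (use kl in auto)
      then have "(1::real) \<le> (\<Sum>l\<in>{1..m}-{k}. of_bool (fst (f k) = fst (f l)))" using kl by simp
      also have "\<dots> \<le> (\<Sum>k\<in>{1..m}. \<Sum>l\<in>{1..m}-{k}. of_bool (fst (f k) = fst (f l)))"
        using kl by (intro member_le_sum) (auto intro: sum_nonneg)
      finally show ?thesis using False by simp
    qed
  qed
  also have "\<dots> = (\<Sum>k\<in>{1..m}. \<Sum>l\<in>{1..m}-{k}. \<Sum>f\<in>AA m. of_bool (fst (f k) = fst (f l)))"
    by (subst sum.swap) (rule sum.cong[OF refl], rule sum.swap)
  also have "\<dots> = (\<Sum>k\<in>{1..m}. \<Sum>l\<in>{1..m}-{k}. 2 * real (card (SS n)) ^ (m - 1))"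
    by (intro sum.cong refl count_eq) auto
  also have "\<dots> \<le> (\<Sum>k\<in>{1..m}. \<Sum>l\<in>{1..m}. 2 * real (card (SS n)) ^ (m - 1))"
    by (intro sum_mono sum_mono2) auto
  also have "\<dots> = 2 * real m ^ 2 * real (card (SS n)) ^ (m - 1)"
    by (simp add: power2_eq_square)
  finally show ?thesis .
qed

lemma DD_ne: assumes "m \<le> n" shows "DD m \<noteq> {}"
proof -
  have "restrict (\<lambda>k. (k, 1::real)) {1..m} \<in> DD m"
    using assms unfolding DD_def AA_def SS_def by (auto simp: inj_on_def)
  then show ?thesis by auto
qed

lemma err_bound:
  assumes "m \<le> n" "1 \<le> m" "\<And>f. f \<in> AA m \<Longrightarrow> \<bar>F f\<bar> \<le> B"
  shows "(\<Sum>f\<in>AA m. F f) / real (card (AA m)) - 2 * B * real m ^ 2 / real n \<le> (\<Sum>f\<in>DD m. F f) / real (card (DD m))"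
proof -
  define a where "a = real (card (AA m))"
  define d where "d = real (card (DD m))"
  have sub: "DD m \<subseteq> AA m" unfolding DD_def by auto
  have fD: "finite (DD m)" using finite_subset[OF sub fin_AA] .
  have d0: "d > 0" unfolding d_def using DD_ne[OF assms(1)] fD by (simp add: card_gt_0_iff)
  have N: "real (card (SS n)) = 2 * real n" by (simp add: card_SS)
  have n0: "real n > 0" using assms by simp
  have aN: "a = (2 * real n) ^ m" unfolding a_def by (simp add: card_AA card_SS)
  have a0: "a > 0" using aN n0 by simp
  have ad: "real (card (AA m - DD m)) = a - d" unfolding a_def d_def
    using sub by (simp add: card_Diff_subset fD card_mono)
  have B0: "B \<ge> 0" using assms(3)[of "restrict (\<lambda>k. (k, 1::real)) {1..m}"] assms(1)
    unfolding AA_def SS_def by force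
  have SA: "(\<Sum>f\<in>AA m. F f) = (\<Sum>f\<in>DD m. F f) + (\<Sum>f\<in>AA m - DD m. F f)"
    using sub by (simp add: sum.subset_diff)
  have SD: "\<bar>\<Sum>f\<in>DD m. F f\<bar> \<le> B * d"
  proof -
    have "\<bar>\<Sum>f\<in>DD m. F f\<bar> \<le> (\<Sum>f\<in>DD m. \<bar>F f\<bar>)" by (rule sum_abs)
    also have "\<dots> \<le> (\<Sum>f\<in>DD m. B)" using sub assms(3) by (intro sum_mono) auto
    finally show ?thesis unfolding d_def by (simp add: mult.commute)
  qed
  have SR: "\<bar>\<Sum>f\<in>AA m - DD m. F f\<bar> \<le> B * (a - d)"
  proof -
    have "\<bar>\<Sum>f\<in>AA m - DD m. F f\<bar> \<le> (\<Sum>f\<in>AA m - DD m. \<bar>F f\<bar>)" by (rule sum_abs)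
    also have "\<dots> \<le> (\<Sum>f\<in>AA m - DD m. B)" using assms(3) by (intro sum_mono) auto
    finally show ?thesis using ad by (simp add: mult.commute)
  qed
  have amd: "a - d \<le> 2 * real m ^ 2 * (2 * real n) ^ (m - 1)" using nonD[of m] ad N by simp
  have pw: "(2 * real n) ^ m = (2 * real n) * (2 * real n) ^ (m - 1)"
    using assms(2) by (metis Suc_diff_1 less_le_trans zero_less_one power_Suc)
  have amd2: "(a - d) / a \<le> real m ^ 2 / real n"
  proof -
    have "(a - d) / a \<le> 2 * real m ^ 2 * (2 * real n) ^ (m - 1) / a" using amd a0 by (simp add: divide_right_mono)
    also have "\<dots> = real m ^ 2 / real n" unfolding aN pw using n0 by (simp add: field_simps)
    finally show ?thesis .
  qed
  define sd where "sd = (\<Sum>f\<in>DD m. F f)"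
  define sr where "sr = (\<Sum>f\<in>AA m - DD m. F f)"
  have "(sd + sr) / a - sd / d = (sd * (d - a)/ d + sr) / a" using a0 d0 by (simp add: field_simps)
  also have "\<dots> \<le> (B * (a - d) + B * (a - d)) / a"
  proof -
    have "sd * (d - a) / d \<le> B * (a - d)"
    proof -
      have "sd * (d - a) / d = - (sd / d) * (a - d)" using d0 by (simp add: field_simps)
      also have "\<dots> \<le> B * (a - d)"
      proof (rule mult_right_mono)
        have "\<bar>sd / d\<bar> \<le> B" using SD d0 unfolding sd_def by (simp add: divide_le_eq abs_divide)
        then show "- (sd / d) \<le> B" using abs_ge_minus_self[of "sd/d"] by linarith
        show "0 \<le> a - d" using ad by (metis of_nat_0_le_iff)
      qed
      finally show ?thesis .
    qed
    moreover have "sr \<le> B * (a - d)" using SR unfolding sr_def by simp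
    ultimately show ?thesis using a0 by (simp add: divide_right_mono)
  qed
  also have "\<dots> = 2 * B * ((a - d) / a)" by (simp add: field_simps)
  also have "\<dots> \<le> 2 * B * (real m ^ 2 / real n)" by (rule mult_left_mono) (use amd2 B0 in auto)
  finally have "(sd + sr) / a - sd / d \<le> 2 * B * real m ^ 2 / real n" by simp
  then show ?thesis using SA unfolding sd_def sr_def a_def d_def by simp
qed

end



definition g3 :: "(nat \<Rightarrow> nat \<times> real) \<Rightarrow> (nat \<Rightarrow> real) list" where
  "g3 f = [VV (f 1) (ng (f 2)) (f 4), VV (f 2) (ng (f 3)) (f 5), VV (f 3) (ng (f 1)) (f 6)]"
definition g5 :: "(nat \<Rightarrow> nat \<times> real) \<Rightarrow> (nat \<Rightarrow> real) list" where
  "g5 f = map (\<lambda>j. VV (f 1) (f (2*j)) (f (2*j+1))) [1,2,3,4] @ [VV (f 10) (f 11) (f 12)]"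

lemma card_fiber_le:
  assumes "finite D" "t \<in> D" "t' \<in> D" "\<sigma> ` D \<subseteq> D" "inj_on \<sigma> D" "\<sigma> t = t'"
    "\<And>u. u \<in> D \<Longrightarrow> g (\<sigma> u) = \<tau> (g u)"
  shows "card {u\<in>D. g u = g t} \<le> card {u\<in>D. g u = g t'}"
proof (rule card_inj_on_le)
  show "inj_on \<sigma> {u \<in> D. g u = g t}" using assms(5) by (rule inj_on_subset) auto
  show "\<sigma> ` {u \<in> D. g u = g t} \<subseteq> {u \<in> D. g u = g t'}"
  proof
    fix w assume "w \<in> \<sigma> ` {u \<in> D. g u = g t}"
    then obtain u where u: "u \<in> D" "g u = g t" "w = \<sigma> u" by auto
    have "g (\<sigma> u) = \<tau> (g t)" using assms(7)[OF u(1)] u(2) by simp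
    also have "\<dots> = g t'" using assms(7)[OF assms(2)] assms(6) by simp
    finally show "w \<in> {u \<in> D. g u = g t'}" using u assms(4) by auto
  qed
  show "finite {u \<in> D. g u = g t'}" using assms(1) by simp
qed

lemma sum_fibers:
  assumes "finite D" "\<And>t. t \<in> D \<Longrightarrow> card {u\<in>D. g u = g t} = K"
  shows "(\<Sum>t\<in>D. h (g t)) = real K * (\<Sum>c\<in>g ` D. h c)"
proof -
  have "(\<Sum>t\<in>D. h (g t)) = (\<Sum>c\<in>g ` D. \<Sum>t\<in>{u\<in>D. g u = c}. h (g t))"
    by (rule sum.image_gen[OF assms(1)])
  also have "\<dots> = (\<Sum>c\<in>g ` D. real K * h c)"
  proof (rule sum.cong[OF refl])
    fix c assume "c \<in> g ` D"
    then obtain t where t: "t \<in> D" "c = g t" by auto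
    have "(\<Sum>u\<in>{u\<in>D. g u = c}. h (g u)) = (\<Sum>u\<in>{u\<in>D. g u = c}. h c)" by simp
    also have "\<dots> = real K * h c" using assms(2)[OF t(1)] t(2) by simp
    finally show "(\<Sum>u\<in>{u\<in>D. g u = c}. h (g u)) = real K * h c" .
  qed
  finally show ?thesis by (simp add: sum_distrib_left)
qed

lemma avg_fibers:
  assumes "finite D" "D \<noteq> {}" "\<And>t. t \<in> D \<Longrightarrow> card {u\<in>D. g u = g t} = K"
  shows "(\<Sum>c\<in>g ` D. h c) / real (card (g ` D)) = (\<Sum>t\<in>D. h (g t)) / real (card D)"
proof -
  have c: "real (card D) = real K * real (card (g ` D))"
    using sum_fibers[OF assms(1,3), of "\<lambda>_. 1"] by simp
  obtain t where t: "t \<in> D" using assms(2) by auto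
  have "t \<in> {u\<in>D. g u = g t}" using t by simp
  then have "card {u\<in>D. g u = g t} > 0" using assms(1) by (auto simp: card_gt_0_iff)
  then have "K > 0" using assms(3)[OF t] by simp
  then show ?thesis using sum_fibers[OF assms(1,3), of h] c by (simp add: field_simps)
qed

lemma ext_perm:
  assumes "finite U" "A \<subseteq> U" "B \<subseteq> U" "bij_betw q A B"
  shows "\<exists>p. bij_betw p U U \<and> (\<forall>i\<in>A. p i = q i)"
proof -
  have "card A = card B" using assms(4) by (rule bij_betw_same_card)
  then have "card (U - A) = card (U - B)"
    using assms by (simp add: card_Diff_subset finite_subset)
  then obtain r where r: "bij_betw r (U - A) (U - B)"
    using finite_same_card_bij assms(1) by blast
  define p where "p i = (if i \<in> A then q i else r i)" for i
  have 1: "bij_betw p A B" using assms(4) by (rule bij_betw_cong[THEN iffD1, rotated]) (simp add: p_def)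
  have 2: "bij_betw p (U - A) (U - B)" using r by (rule bij_betw_cong[THEN iffD1, rotated]) (simp add: p_def)
  have "bij_betw p (A \<union> (U - A)) (B \<union> (U - B))" by (rule bij_betw_combine[OF 1 2]) auto
  moreover have "A \<union> (U - A) = U" "B \<union> (U - B) = U" using assms by auto
  ultimately have "bij_betw p U U" by simp
  moreover have "\<forall>i\<in>A. p i = q i" by (simp add: p_def)
  ultimately show ?thesis by blast
qed

context asg begin

definition pi :: "(nat \<Rightarrow> nat) \<Rightarrow> (nat \<Rightarrow> real) \<Rightarrow> nat \<times> real \<Rightarrow> nat \<times> real" where
  "pi p e a = (p (fst a), e (fst a) * snd a)"
definition sig :: "(nat \<Rightarrow> nat) \<Rightarrow> (nat \<Rightarrow> real) \<Rightarrow> nat \<Rightarrow> (nat \<Rightarrow> nat \<times> real) \<Rightarrow> (nat \<Rightarrow> nat \<times> real)" where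
  "sig p e m f = restrict (\<lambda>k. pi p e (f k)) {1..m}"
definition tau :: "(nat \<Rightarrow> nat) \<Rightarrow> (nat \<Rightarrow> real) \<Rightarrow> (nat \<Rightarrow> real) \<Rightarrow> (nat \<Rightarrow> real)" where
  "tau p e v = (\<lambda>t. if t \<in> {1..n} then e (inv_into {1..n} p t) * v (inv_into {1..n} p t) else 0)"

lemma DD_S: "f \<in> DD m \<Longrightarrow> k \<in> {1..m} \<Longrightarrow> f k \<in> SS n"
  unfolding DD_def AA_def by (blast intro: PiE_mem)
lemma DD_out: "f \<in> DD m \<Longrightarrow> k \<notin> {1..m} \<Longrightarrow> f k = undefined"
  unfolding DD_def AA_def by (blast intro: PiE_arb)
lemma DD_inj: "f \<in> DD m \<Longrightarrow> inj_on (\<lambda>k. fst (f k)) {1..m}"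
  unfolding DD_def by blast

lemma pi_ng: "pi p e (ng a) = ng (pi p e a)" by (simp add: pi_def ng_def)

lemma tau_VV:
  assumes p: "bij_betw p {1..n} {1..n}" and abc: "a \<in> SS n" "b \<in> SS n" "c \<in> SS n"
  shows "tau p e (VV a b c) = VV (pi p e a) (pi p e b) (pi p e c)"
proof
  fix t
  have inj: "inj_on p {1..n}" and im: "p ` {1..n} = {1..n}" using p by (auto simp: bij_betw_def)
  have fa: "fst a \<in> {1..n}" "fst b \<in> {1..n}" "fst c \<in> {1..n}" using abc by (auto simp: SS_def)
  show "tau p e (VV a b c) t = VV (pi p e a) (pi p e b) (pi p e c) t"
  proof (cases "t \<in> {1..n}")
    case True
    define u where "u = inv_into {1..n} p t"
    have u: "u \<in> {1..n}" "p u = t" unfolding u_def using True im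
      by (metis inv_into_into) (metis True f_inv_into_f im u_def)
    have eq: "\<And>i. i \<in> {1..n} \<Longrightarrow> ind (p i) t = ind i u"
    proof -
      fix i assume i: "i \<in> {1..n}"
      have "(t = p i) = (u = i)" using u inj i unfolding inj_on_def by metis
      then show "ind (p i) t = ind i u" unfolding ind_def by simp
    qed
    have ee: "\<And>i. e u * ind i u = e i * ind i u" unfolding ind_def by simp
    have "tau p e (VV a b c) t = e u * ((snd a * ind (fst a) u + snd b * ind (fst b) u + snd c * ind (fst c) u) / sqrt 3)"
      using True unfolding tau_def VV_def vec3_def u_def by simp
    also have "\<dots> = ((snd a * (e u * ind (fst a) u) + snd b * (e u * ind (fst b) u) + snd c * (e u * ind (fst c) u)) / sqrt 3)"
      by (simp add: algebra_simps)
    also have "\<dots> = ((snd a * (e (fst a) * ind (fst a) u) + snd b * (e (fst b) * ind (fst b) u) + snd c * (e (fst c) * ind (fst c) u)) / sqrt 3)"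
      by (simp only: ee)
    also have "\<dots> = ((snd a * (e (fst a) * ind (p (fst a)) t) + snd b * (e (fst b) * ind (p (fst b)) t) + snd c * (e (fst c) * ind (p (fst c)) t)) / sqrt 3)"
      by (simp only: eq fa)
    also have "\<dots> = VV (pi p e a) (pi p e b) (pi p e c) t"
      unfolding VV_def vec3_def pi_def by (simp add: algebra_simps)
    finally show ?thesis .
  next
    case False
    then have "t \<noteq> p (fst a)" "t \<noteq> p (fst b)" "t \<noteq> p (fst c)" using fa im by auto
    then have "VV (pi p e a) (pi p e b) (pi p e c) t = 0" unfolding VV_def vec3_def pi_def ind_def by simp
    moreover have "tau p e (VV a b c) t = 0" using False unfolding tau_def by auto
    ultimately show ?thesis by simp
  qed
qed

lemma pi_SS: assumes "bij_betw p {1..n} {1..n}" "\<forall>i. e i \<in> {-1,1}" "a \<in> SS n"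
  shows "pi p e a \<in> SS n"
  using assms unfolding pi_def SS_def bij_betw_def by auto

lemma sig_apply: "k \<in> {1..m} \<Longrightarrow> sig p e m f k = pi p e (f k)" by (simp add: sig_def)

lemma sig_DD: assumes p: "bij_betw p {1..n} {1..n}" and e: "\<forall>i. e i \<in> {-1,1}"
  shows "sig p e m ` DD m \<subseteq> DD m" "inj_on (sig p e m) (DD m)"
proof -
  have inj: "inj_on p {1..n}" using p by (auto simp: bij_betw_def)
  show "sig p e m ` DD m \<subseteq> DD m"
  proof
    fix g assume "g \<in> sig p e m ` DD m"
    then obtain f where f: "f \<in> DD m" "g = sig p e m f" by auto
    have fS: "\<And>k. k \<in> {1..m} \<Longrightarrow> f k \<in> SS n" using DD_S[OF f(1)] by auto
    have "g \<in> AA m" unfolding AA_def f(2) sig_def using pi_SS[OF p e] fS by auto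
    moreover have "inj_on (\<lambda>k. fst (g k)) {1..m}"
    proof (rule inj_onI)
      fix k l assume kl: "k \<in> {1..m}" "l \<in> {1..m}" "fst (g k) = fst (g l)"
      then have "p (fst (f k)) = p (fst (f l))" unfolding f(2) sig_def pi_def by simp
      moreover have "fst (f k) \<in> {1..n}" "fst (f l) \<in> {1..n}" using fS[OF kl(1)] fS[OF kl(2)] by (auto simp: SS_def)
      ultimately have "fst (f k) = fst (f l)" by (rule inj_onD[OF inj])
      then show "k = l" using inj_onD[OF DD_inj[OF f(1)] _ kl(1) kl(2)] by simp
    qed
    ultimately show "g \<in> DD m" unfolding DD_def by auto
  qed
  show "inj_on (sig p e m) (DD m)"
  proof (rule inj_onI)
    fix f f' assume ff: "f \<in> DD m" "f' \<in> DD m" "sig p e m f = sig p e m f'"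
    show "f = f'"
    proof
      fix k
      show "f k = f' k"
      proof (cases "k \<in> {1..m}")
        case True
        have "pi p e (f k) = pi p e (f' k)" using ff(3) True by (metis sig_apply)
        moreover have "f k \<in> SS n" "f' k \<in> SS n" using DD_S ff True by auto
        ultimately have 1: "p (fst (f k)) = p (fst (f' k))" "e (fst (f k)) * snd (f k) = e (fst (f' k)) * snd (f' k)"
          and 2: "fst (f k) \<in> {1..n}" "fst (f' k) \<in> {1..n}" unfolding pi_def SS_def by auto
        have 3: "fst (f k) = fst (f' k)" using 1(1) 2 by (rule inj_onD[OF inj])
        have "e (fst (f k)) \<noteq> 0" using e by (metis insert_iff singletonD zero_neq_neg_one zero_neq_one)
        then have "snd (f k) = snd (f' k)" using 1(2) 3 by simp
        then show ?thesis using 3 by (simp add: prod_eq_iff)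
      next
        case False
        then show ?thesis using DD_out[OF ff(1)] DD_out[OF ff(2)] by auto
      qed
    qed
  qed
qed

lemma transitive:
  assumes t: "t \<in> DD m" and t': "t' \<in> DD m"
  shows "\<exists>p e. bij_betw p {1..n} {1..n} \<and> (\<forall>i. e i \<in> {-1,1}) \<and> sig p e m t = t'"
proof -
  define I where "I = {1..m}"
  define h where "h k = fst (t k)" for k
  define h' where "h' k = fst (t' k)" for k
  have ih: "inj_on h I" "inj_on h' I" using DD_inj[OF t] DD_inj[OF t'] unfolding h_def h'_def I_def by auto
  have tS: "\<And>k. k \<in> I \<Longrightarrow> t k \<in> SS n" "\<And>k. k \<in> I \<Longrightarrow> t' k \<in> SS n"
    using DD_S[OF t] DD_S[OF t'] unfolding I_def by auto
  have fk: "fst (t k) \<in> {1..n} \<and> fst (t' k) \<in> {1..n}" if k: "k \<in> I" for k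
    using tS(1)[OF k] tS(2)[OF k] unfolding SS_def by auto
  have sub: "h ` I \<subseteq> {1..n}" "h' ` I \<subseteq> {1..n}" using fk unfolding h_def h'_def by auto
  define q where "q i = h' (inv_into I h i)" for i
  have bq: "bij_betw q (h ` I) (h' ` I)"
  proof -
    have "bij_betw (inv_into I h) (h ` I) I" using ih(1) by (simp add: bij_betw_inv_into inj_on_imp_bij_betw)
    moreover have "bij_betw h' I (h' ` I)" using ih(2) by (simp add: inj_on_imp_bij_betw)
    ultimately have "bij_betw (h' \<circ> inv_into I h) (h ` I) (h' ` I)" by (rule bij_betw_trans)
    then show ?thesis unfolding q_def comp_def by simp
  qed
  obtain p where p: "bij_betw p {1..n} {1..n}" "\<forall>i\<in>h ` I. p i = q i"
    using ext_perm[OF _ sub bq] by auto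
  define e where "e i = (if i \<in> h ` I then snd (t' (inv_into I h i)) * snd (t (inv_into I h i)) else 1)" for i
  have sgn: "snd (t k) \<in> {-1,1} \<and> snd (t' k) \<in> {-1,1}" if k: "k \<in> I" for k
    using tS(1)[OF k] tS(2)[OF k] unfolding SS_def by auto
  have e: "\<forall>i. e i \<in> {-1,1}"
  proof
    fix i show "e i \<in> {-1,1}"
    proof (cases "i \<in> h ` I")
      case True
      then have "inv_into I h i \<in> I" by (simp add: inv_into_into)
      then show ?thesis using sgn[of "inv_into I h i"] True unfolding e_def by auto
    qed (simp add: e_def)
  qed
  have "sig p e m t = t'"
  proof
    fix k
    show "sig p e m t k = t' k"
    proof (cases "k \<in> I")
      case True
      have iv: "inv_into I h (h k) = k" using ih(1) True by (simp add: inv_into_f_f)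
      have "p (h k) = h' k" using p(2) True iv unfolding q_def by auto
      moreover have "e (h k) * snd (t k) = snd (t' k)"
        using True iv sgn[OF True] unfolding e_def by auto
      ultimately show ?thesis using True unfolding sig_def pi_def I_def h_def h'_def
        by (simp add: prod_eq_iff)
    next
      case False
      then show ?thesis using DD_out[OF t'] unfolding sig_def I_def by auto
    qed
  qed
  then show ?thesis using p(1) e by blast
qed

end



context asg begin

lemma params_DD: assumes "params n m i s" shows "restrict (\<lambda>k. (i k, s k)) {1..m} \<in> DD m"
proof -
  have "restrict (\<lambda>k. (i k, s k)) {1..m} \<in> AA m"
    using assms unfolding AA_def params_def SS_def by (auto simp: restrict_PiE_iff)
  moreover have "inj_on (\<lambda>k. fst (restrict (\<lambda>k. (i k, s k)) {1..m} k)) {1..m}"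
  proof -
    have inj: "inj_on i {1..m}" using assms unfolding params_def by blast
    have "inj_on (\<lambda>k. fst (restrict (\<lambda>k. (i k, s k)) {1..m} k)) {1..m} = inj_on i {1..m}"
      by (rule inj_on_cong) simp
    then show ?thesis using inj by simp
  qed
  ultimately show ?thesis unfolding DD_def by simp
qed

lemma DD_params: assumes "f \<in> DD m" shows "params n m (\<lambda>k. fst (f k)) (\<lambda>k. snd (f k))"
proof -
  have S: "fst (f k) \<in> {1..n} \<and> snd (f k) \<in> {-1,1}" if "k \<in> {1..m}" for k
    using DD_S[OF assms that] unfolding SS_def by auto
  show ?thesis unfolding params_def using DD_inj[OF assms] S by auto
qed

lemma C3_eq: "C3 n = g3 ` DD 6"
proof
  show "C3 n \<subseteq> g3 ` DD 6"
  proof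
    fix c assume "c \<in> C3 n"
    then obtain i s where c: "c = [vec3 (s 1) (i 1) (- s 2) (i 2) (s 4) (i 4),
            vec3 (s 2) (i 2) (- s 3) (i 3) (s 5) (i 5),
            vec3 (s 3) (i 3) (- s 1) (i 1) (s 6) (i 6)]" and p: "params n 6 i s"
      unfolding C3_def by blast
    have "g3 (restrict (\<lambda>k. (i k, s k)) {1..6}) = c" unfolding c g3_def VV_def ng_def by simp
    then show "c \<in> g3 ` DD 6" using params_DD[OF p] by force
  qed
  show "g3 ` DD 6 \<subseteq> C3 n"
  proof
    fix c assume "c \<in> g3 ` DD 6"
    then obtain f where f: "f \<in> DD 6" "c = g3 f" by auto
    show "c \<in> C3 n" unfolding C3_def mem_Collect_eq
      by (rule exI[of _ "\<lambda>k. fst (f k)"], rule exI[of _ "\<lambda>k. snd (f k)"]) (simp add: f(2) g3_def VV_def ng_def DD_params[OF f(1)])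
  qed
qed

lemma C5_eq: "C5 n = g5 ` DD 12"
proof
  show "C5 n \<subseteq> g5 ` DD 12"
  proof
    fix c assume "c \<in> C5 n"
    then obtain i s where c: "c = map (\<lambda>j. vec3 (s 1) (i 1) (s (2*j)) (i (2*j)) (s (2*j+1)) (i (2*j+1))) [1,2,3,4]
           @ [vec3 (s 10) (i 10) (s 11) (i 11) (s 12) (i 12)]" and p: "params n 12 i s"
      unfolding C5_def by blast
    have "g5 (restrict (\<lambda>k. (i k, s k)) {1..12}) = c" unfolding c g5_def VV_def by simp
    then show "c \<in> g5 ` DD 12" using params_DD[OF p] by force
  qed
  show "g5 ` DD 12 \<subseteq> C5 n"
  proof
    fix c assume "c \<in> g5 ` DD 12"
    then obtain f where f: "f \<in> DD 12" "c = g5 f" by auto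
    show "c \<in> C5 n" unfolding C5_def mem_Collect_eq
      by (rule exI[of _ "\<lambda>k. fst (f k)"], rule exI[of _ "\<lambda>k. snd (f k)"]) (simp add: f(2) g5_def VV_def DD_params[OF f(1)])
  qed
qed

lemma g3_equiv: assumes p: "bij_betw p {1..n} {1..n}" and u: "u \<in> DD 6"
  shows "g3 (sig p e 6 u) = map (tau p e) (g3 u)"
proof -
  have S: "u 1 \<in> SS n" "u 2 \<in> SS n" "u 3 \<in> SS n" "u 4 \<in> SS n" "u 5 \<in> SS n" "u 6 \<in> SS n"
    using DD_S[OF u] by auto
  have S1: "u (Suc 0) \<in> SS n" using S(1) by simp
  show ?thesis by (simp add: g3_def sig_apply tau_VV[OF p] ng_SS pi_ng S S1)
qed

lemma g5_equiv: assumes p: "bij_betw p {1..n} {1..n}" and u: "u \<in> DD 12"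
  shows "g5 (sig p e 12 u) = map (tau p e) (g5 u)"
proof -
  have S: "u 1 \<in> SS n" "u 2 \<in> SS n" "u 3 \<in> SS n" "u 4 \<in> SS n" "u 5 \<in> SS n" "u 6 \<in> SS n"
     "u 7 \<in> SS n" "u 8 \<in> SS n" "u 9 \<in> SS n" "u 10 \<in> SS n" "u 11 \<in> SS n" "u 12 \<in> SS n"
    using DD_S[OF u] by auto
  have S1: "u (Suc 0) \<in> SS n" using S(1) by simp
  show ?thesis by (simp add: g5_def sig_apply tau_VV[OF p] S S1)
qed

lemma fin_DD: "finite (DD m)"
  by (rule finite_subset[OF _ fin_AA[of m]]) (auto simp: DD_def)

lemma fiber_const:
  assumes eqv: "\<And>p e u. bij_betw p {1..n} {1..n} \<Longrightarrow> u \<in> DD m \<Longrightarrow> g (sig p e m u) = map (tau p e) (g u)"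
    and t: "t \<in> DD m" and t': "t' \<in> DD m"
  shows "card {u\<in>DD m. g u = g t} \<le> card {u\<in>DD m. g u = g t'}"
proof -
  obtain p e where pe: "bij_betw p {1..n} {1..n}" "\<forall>i. e i \<in> {-1,1}" "sig p e m t = t'"
    using transitive[OF t t'] by blast
  show ?thesis
    by (rule card_fiber_le[OF fin_DD t t' sig_DD[OF pe(1,2)] pe(3), where \<tau>="map (tau p e)"]) (rule eqv[OF pe(1)])
qed

lemma avg_DD:
  assumes eqv: "\<And>p e u. bij_betw p {1..n} {1..n} \<Longrightarrow> u \<in> DD m \<Longrightarrow> g (sig p e m u) = map (tau p e) (g u)"
    and mn: "m \<le> n"
  shows "(\<Sum>c\<in>g ` DD m. h c) / real (card (g ` DD m)) = (\<Sum>t\<in>DD m. h (g t)) / real (card (DD m))"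
proof -
  obtain t0 where t0: "t0 \<in> DD m" using DD_ne[OF mn] by auto
  show ?thesis
  proof (rule avg_fibers[OF fin_DD DD_ne[OF mn]])
    fix t assume t: "t \<in> DD m"
    show "card {u \<in> DD m. g u = g t} = card {u \<in> DD m. g u = g t0}"
      using fiber_const[OF eqv t t0] fiber_const[OF eqv t0 t] by simp
  qed
qed

end



lemma nae3: assumes "a \<in> {-1,1}" "b \<in> {-1,1}" "c \<in> {-1,1}"
  shows "(of_bool (NAE [a, b, c]) :: real) = 1 - (1 + a * b + b * c + c * a) / 4"
  using assms unfolding NAE_def by auto

lemma nae5: assumes "a \<in> {-1,1}" "b \<in> {-1,1}" "c \<in> {-1,1}" "d \<in> {-1,1}" "g \<in> {-1,1}"
  shows "(of_bool (NAE [a, b, c, d, g]) :: real) =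
    1 - ((1 + 1 * a) * ((1 + 1 * b) * ((1 + 1 * c) * ((1 + 1 * d) * (1 + 1 * g))))
       + (1 + -1 * a) * ((1 + -1 * b) * ((1 + -1 * c) * ((1 + -1 * d) * (1 + -1 * g))))) / 32"
  using assms unfolding NAE_def by auto

lemma sum_if_const: "(\<Sum>c\<in>A. if P c then K else 0) = (K::real) * (\<Sum>c\<in>A. of_bool (P c))"
  unfolding sum_distrib_left by (rule sum.cong) auto

lemma prod_bd: "0 \<le> a \<Longrightarrow> a \<le> 2 \<Longrightarrow> 0 \<le> b \<Longrightarrow> b \<le> B \<Longrightarrow> 0 \<le> a * b \<and> a * b \<le> 2 * (B::real)"
  by (simp add: mult_mono)

context asg begin

lemma DD_dist: "t \<in> DD m \<Longrightarrow> k \<in> {1..m} \<Longrightarrow> l \<in> {1..m} \<Longrightarrow> k \<noteq> l \<Longrightarrow> fst (t k) \<noteq> fst (t l)"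
  using DD_inj[of t m] unfolding inj_on_def by blast

lemma XX_eq: "fst a \<noteq> fst b \<Longrightarrow> fst a \<noteq> fst c \<Longrightarrow> fst b \<noteq> fst c \<Longrightarrow> XX x a b c = x (VV a b c)"
  unfolding XX_def by simp

lemma nae_g3: assumes t: "t \<in> DD 6"
  shows "(of_bool (NAE (map x (g3 t))) :: real) = 1 - F3 t"
proof -
  have S: "\<And>k. k \<in> {1..6} \<Longrightarrow> t k \<in> SS n" using DD_S[OF t] by auto
  have d: "\<And>k l. k \<in> {1..6} \<Longrightarrow> l \<in> {1..6} \<Longrightarrow> k \<noteq> l \<Longrightarrow> fst (t k) \<noteq> fst (t l)"
    using DD_dist[OF t] by auto
  have d12: "fst (t 1) \<noteq> fst (t 2)" and d14: "fst (t 1) \<noteq> fst (t 4)" and d24: "fst (t 2) \<noteq> fst (t 4)"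
    and d23: "fst (t 2) \<noteq> fst (t 3)" and d25: "fst (t 2) \<noteq> fst (t 5)" and d35: "fst (t 3) \<noteq> fst (t 5)"
    and d13: "fst (t 3) \<noteq> fst (t 1)" and d36: "fst (t 3) \<noteq> fst (t 6)" and d16: "fst (t 1) \<noteq> fst (t 6)"
    by (rule d; simp)+
  note dd = d12 d14 d24 d23 d25 d35 d13 d36 d16
  note dd' = dd[simplified]
  have y1: "XX x (t 1) (ng (t 2)) (t 4) = x (VV (t 1) (ng (t 2)) (t 4))"
    and y2: "XX x (t 2) (ng (t 3)) (t 5) = x (VV (t 2) (ng (t 3)) (t 5))"
    and y3: "XX x (t 3) (ng (t 1)) (t 6) = x (VV (t 3) (ng (t 1)) (t 6))"
    by (rule XX_eq; simp only: fst_ng d12 d14 d24 d23 d25 d35 d13 d36 d16 not_False_eq_True)+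
  have p1: "XX x (t 1) (ng (t 2)) (t 4) \<in> {-1,1}"
    by (rule XX_pm) (simp_all add: S ng_SS dd dd')
  have p2: "XX x (t 2) (ng (t 3)) (t 5) \<in> {-1,1}"
    by (rule XX_pm) (simp_all add: S ng_SS dd dd')
  have p3: "XX x (t 3) (ng (t 1)) (t 6) \<in> {-1,1}"
    by (rule XX_pm) (simp_all add: S ng_SS dd dd')
  have "map x (g3 t) = [XX x (t 1) (ng (t 2)) (t 4), XX x (t 2) (ng (t 3)) (t 5), XX x (t 3) (ng (t 1)) (t 6)]"
    unfolding g3_def y1 y2 y3 by simp
  then show ?thesis using nae3[OF p1 p2 p3] unfolding F3_def by simp
qed

lemma nae_g5: assumes t: "t \<in> DD 12"
  shows "(of_bool (NAE (map x (g5 t))) :: real) = 1 - (P5 1 t + P5 (-1) t) / 32"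
proof -
  have S: "\<And>k. k \<in> {1..12} \<Longrightarrow> t k \<in> SS n" using DD_S[OF t] by auto
  have d: "\<And>k l. k \<in> {1..12} \<Longrightarrow> l \<in> {1..12} \<Longrightarrow> k \<noteq> l \<Longrightarrow> fst (t k) \<noteq> fst (t l)"
    using DD_dist[OF t] by auto
  have yy: "\<And>a b c. a \<in> {1..12} \<Longrightarrow> b \<in> {1..12} \<Longrightarrow> c \<in> {1..12} \<Longrightarrow> a \<noteq> b \<Longrightarrow> a \<noteq> c \<Longrightarrow> b \<noteq> c \<Longrightarrow>
     XX x (t a) (t b) (t c) = x (VV (t a) (t b) (t c)) \<and> XX x (t a) (t b) (t c) \<in> {-1,1}"
  proof -
    fix a b c :: nat assume h: "a \<in> {1..12}" "b \<in> {1..12}" "c \<in> {1..12}" "a \<noteq> b" "a \<noteq> c" "b \<noteq> c"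
    have "fst (t a) \<noteq> fst (t b)" "fst (t a) \<noteq> fst (t c)" "fst (t b) \<noteq> fst (t c)" using d h by auto
    then show "XX x (t a) (t b) (t c) = x (VV (t a) (t b) (t c)) \<and> XX x (t a) (t b) (t c) \<in> {-1,1}"
      using XX_eq XX_pm S h by auto
  qed
  have q1: "XX x (t 1) (t 2) (t 3) = x (VV (t 1) (t 2) (t 3)) \<and> XX x (t 1) (t 2) (t 3) \<in> {-1,1}" by (rule yy) auto
  have q2: "XX x (t 1) (t 4) (t 5) = x (VV (t 1) (t 4) (t 5)) \<and> XX x (t 1) (t 4) (t 5) \<in> {-1,1}" by (rule yy) auto
  have q3: "XX x (t 1) (t 6) (t 7) = x (VV (t 1) (t 6) (t 7)) \<and> XX x (t 1) (t 6) (t 7) \<in> {-1,1}" by (rule yy) auto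
  have q4: "XX x (t 1) (t 8) (t 9) = x (VV (t 1) (t 8) (t 9)) \<and> XX x (t 1) (t 8) (t 9) \<in> {-1,1}" by (rule yy) auto
  have q5: "XX x (t 10) (t 11) (t 12) = x (VV (t 10) (t 11) (t 12)) \<and> XX x (t 10) (t 11) (t 12) \<in> {-1,1}" by (rule yy) auto
  have "map x (g5 t) = [XX x (t 1) (t 2) (t 3), XX x (t 1) (t 4) (t 5), XX x (t 1) (t 6) (t 7),
      XX x (t 1) (t 8) (t 9), XX x (t 10) (t 11) (t 12)]"
    unfolding g5_def using q1 q2 q3 q4 q5 by simp
  then show ?thesis using nae5[OF q1[THEN conjunct2] q2[THEN conjunct2] q3[THEN conjunct2] q4[THEN conjunct2] q5[THEN conjunct2]]
    unfolding P5_def by simp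
qed

lemma AA_S: "f \<in> AA m \<Longrightarrow> k \<in> {1..m} \<Longrightarrow> f k \<in> SS n"
  unfolding AA_def by (blast intro: PiE_mem)

lemma F3_bd: assumes f: "f \<in> AA 6" shows "\<bar>F3 f\<bar> \<le> 1"
proof -
  have S: "\<And>k. k \<in> {1..6} \<Longrightarrow> f k \<in> SS n" using AA_S[OF f] by auto
  define a where "a = XX x (f 1) (ng (f 2)) (f 4)"
  define b where "b = XX x (f 2) (ng (f 3)) (f 5)"
  define c where "c = XX x (f 3) (ng (f 1)) (f 6)"
  have ab: "\<bar>a\<bar> \<le> 1" "\<bar>b\<bar> \<le> 1" "\<bar>c\<bar> \<le> 1" unfolding a_def b_def c_def
    by (rule XX_bd; simp add: S ng_SS)+
  have "\<bar>a * b\<bar> \<le> 1" "\<bar>b * c\<bar> \<le> 1" "\<bar>c * a\<bar> \<le> 1" using ab by (simp_all add: abs_mult mult_le_one)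
  then have "\<bar>1 + a * b + b * c + c * a\<bar> \<le> 4" by (simp add: abs_le_iff)
  then show ?thesis unfolding F3_def a_def[symmetric] b_def[symmetric] c_def[symmetric] by simp
qed

lemma F5_bd: assumes f: "f \<in> AA 12" shows "\<bar>(P5 1 f + P5 (-1) f) / 32\<bar> \<le> 2"
proof -
  have S: "\<And>k. k \<in> {1..12} \<Longrightarrow> f k \<in> SS n" using AA_S[OF f] by auto
  have fac: "0 \<le> 1 + e * XX x a b c \<and> 1 + e * XX x a b c \<le> 2" if ee: "e \<in> {-1,1}" and abc: "a \<in> SS n" "b \<in> SS n" "c \<in> SS n" for e a b c
  proof -
    have "e = -1 \<or> e = 1" using ee by simp
    then show ?thesis using XX_bd[OF abc] by (auto simp: abs_le_iff)
  qed
  have P: "0 \<le> P5 e f \<and> P5 e f \<le> 32" if e: "e \<in> {-1,1}" for e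
  proof -
    have f1: "0 \<le> 1 + e * XX x (f 1) (f 2) (f 3) \<and> 1 + e * XX x (f 1) (f 2) (f 3) \<le> 2" by (rule fac[OF e]; rule S; simp)
    have f2: "0 \<le> 1 + e * XX x (f 1) (f 4) (f 5) \<and> 1 + e * XX x (f 1) (f 4) (f 5) \<le> 2" by (rule fac[OF e]; rule S; simp)
    have f3: "0 \<le> 1 + e * XX x (f 1) (f 6) (f 7) \<and> 1 + e * XX x (f 1) (f 6) (f 7) \<le> 2" by (rule fac[OF e]; rule S; simp)
    have f4: "0 \<le> 1 + e * XX x (f 1) (f 8) (f 9) \<and> 1 + e * XX x (f 1) (f 8) (f 9) \<le> 2" by (rule fac[OF e]; rule S; simp)
    have f5: "0 \<le> 1 + e * XX x (f 10) (f 11) (f 12) \<and> 1 + e * XX x (f 10) (f 11) (f 12) \<le> 2" by (rule fac[OF e]; rule S; simp)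
    have "0 \<le> (1 + e * XX x (f 1) (f 8) (f 9)) * (1 + e * XX x (f 10) (f 11) (f 12))
       \<and> (1 + e * XX x (f 1) (f 8) (f 9)) * (1 + e * XX x (f 10) (f 11) (f 12)) \<le> 2 * 2"
      using f4 f5 by (intro prod_bd) auto
    then have "0 \<le> (1 + e * XX x (f 1) (f 6) (f 7)) * ((1 + e * XX x (f 1) (f 8) (f 9)) * (1 + e * XX x (f 10) (f 11) (f 12)))
       \<and> (1 + e * XX x (f 1) (f 6) (f 7)) * ((1 + e * XX x (f 1) (f 8) (f 9)) * (1 + e * XX x (f 10) (f 11) (f 12))) \<le> 2 * (2 * 2)"
      using f3 by (intro prod_bd) auto
    then have "0 \<le> (1 + e * XX x (f 1) (f 4) (f 5)) * ((1 + e * XX x (f 1) (f 6) (f 7)) * ((1 + e * XX x (f 1) (f 8) (f 9)) * (1 + e * XX x (f 10) (f 11) (f 12))))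
       \<and> (1 + e * XX x (f 1) (f 4) (f 5)) * ((1 + e * XX x (f 1) (f 6) (f 7)) * ((1 + e * XX x (f 1) (f 8) (f 9)) * (1 + e * XX x (f 10) (f 11) (f 12)))) \<le> 2 * (2 * (2 * 2))"
      using f2 by (intro prod_bd) auto
    then have "0 \<le> P5 e f \<and> P5 e f \<le> 2 * (2 * (2 * (2 * 2)))"
      unfolding P5_def using f1 by (intro prod_bd) auto
    then show ?thesis by simp
  qed
  show ?thesis using P[of 1] P[of "-1"] by (simp add: abs_le_iff)
qed

end



lemma key:
  fixes t :: real
  shows "(1 - 3 / sqrt 21) * (1 - (1 - 3*t)/4) + (3 / sqrt 21) * (1 - (1 + 6*t + t^2)/16) \<le> 3 * (sqrt 21 - 4) / 2"
proof -
  define s where "s = sqrt 21"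
  have s2: "s * s = 21" unfolding s_def by simp
  have s0: "s > 0" unfolding s_def by simp
  have id: "3 * (s - 4) / 2 - ((1 - 3 / s) * (1 - (1 - 3*t)/4) + (3 / s) * (1 - (1 + 6*t + t^2)/16))
     = 3 / (16 * s) * (t - (2*s - 9))^2"
  proof -
    have "16 * s * (3 * (s - 4) / 2 - ((1 - 3 / s) * (1 - (1 - 3*t)/4) + (3 / s) * (1 - (1 + 6*t + t^2)/16)))
       = 24 * s * s - 96 * s - (4 * s * (3 + 3*t) - 12 * (3 + 3 * t) + 3 * (15 - 6*t - t^2))"
      using s0 by (simp add: field_simps)
    also have "\<dots> = 3 * (t - (2*s - 9))^2"
      using s2 by (simp add: power2_eq_square algebra_simps)
    finally show ?thesis using s0 by (simp add: field_simps)
  qed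
  have "3 / (16 * s) * (t - (2*s - 9))^2 \<ge> 0" using s0 by simp
  then show ?thesis using id unfolding s_def by linarith
qed

lemma cauchy4:
  fixes d :: "'a \<Rightarrow> real"
  assumes "finite A"
  shows "(\<Sum>a\<in>A. d a ^ 2) ^ 2 \<le> real (card A) * (\<Sum>a\<in>A. d a ^ 4)"
proof -
  define N where "N = real (card A)"
  define Q2 where "Q2 = (\<Sum>a\<in>A. d a ^ 2)"
  define Q4 where "Q4 = (\<Sum>a\<in>A. d a ^ 4)"
  have "0 \<le> (\<Sum>a\<in>A. (N * d a ^ 2 - Q2) ^ 2)" by (simp add: sum_nonneg)
  also have "\<dots> = (\<Sum>a\<in>A. N^2 * d a ^ 4 - 2 * N * Q2 * d a ^ 2 + Q2 ^ 2)"
    by (intro sum.cong refl) (simp add: power2_eq_square power4_eq_xxxx algebra_simps)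
  also have "\<dots> = N^2 * Q4 - 2 * N * Q2 * Q2 + N * Q2 ^ 2"
    unfolding Q4_def Q2_def N_def by (simp add: sum.distrib sum_subtractf sum_distrib_left)
  finally have "N * Q2^2 \<le> N * (N * Q4)" by (simp add: power2_eq_square algebra_simps)
  moreover have "N > 0 \<or> A = {}" unfolding N_def using assms by auto
  ultimately have "Q2^2 \<le> N * Q4"
  proof (elim disjE)
    assume "N * Q2\<^sup>2 \<le> N * (N * Q4)" "N > 0"
    then show ?thesis by (simp add: mult_le_cancel_left_pos)
  next
    assume "N * Q2\<^sup>2 \<le> N * (N * Q4)" "A = {}"
    then show ?thesis unfolding Q2_def Q4_def N_def by simp
  qed
  then show ?thesis unfolding N_def Q2_def Q4_def .
qed

context asg begin

lemma main_bound: assumes n12: "n \<ge> 12"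
  shows "sat_weight n x \<le> 3 * (sqrt 21 - 4) / 2 + 700 / real n"
proof -
  define N where "N = real (card (SS n))"
  have N: "N = 2 * real n" unfolding N_def by (simp add: card_SS)
  have N0: "N > 0" using N n12 by simp
  have n0: "real n > 0" using n12 by simp
  have cA: "real (card (AA m)) = N^m" for m by (simp add: card_AA N_def)
  define Q2 where "Q2 = (\<Sum>a\<in>SS n. DS a ^ 2)"
  define Q4 where "Q4 = (\<Sum>a\<in>SS n. DS a ^ 4)"
  define T2 where "T2 = Q2 / N^5"
  define T4 where "T4 = Q4 / N^9"
  have cs: "Q2^2 \<le> N * Q4" unfolding Q2_def Q4_def N_def by (rule cauchy4) simp
  have T24: "T2^2 \<le> T4"
  proof -
    have "T2^2 = Q2^2 / N^10" unfolding T2_def by (simp add: power_divide flip: power_mult)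
    also have "\<dots> \<le> N * Q4 / N^10" using cs N0 by (simp add: divide_right_mono)
    also have "\<dots> = T4" unfolding T4_def using N0 by (simp add: field_simps power_eq_if)
    finally show ?thesis .
  qed
  define R3 where "R3 = (\<Sum>c\<in>C3 n. of_bool (NAE (map x c)) :: real) / real (card (C3 n))"
  define R5 where "R5 = (\<Sum>c\<in>C5 n. of_bool (NAE (map x c)) :: real) / real (card (C5 n))"
  have sw: "sat_weight n x = (1 - 3 / sqrt 21) * R3 + (3 / sqrt 21) * R5"
    unfolding sat_weight_def sum_if_const R3_def R5_def by simp
  have cD6: "real (card (DD 6)) > 0" using DD_ne[of 6] n12 fin_DD by (simp add: card_gt_0_iff)
  have cD12: "real (card (DD 12)) > 0" using DD_ne[of 12] n12 fin_DD by (simp add: card_gt_0_iff)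
  have R3D: "R3 = (\<Sum>t\<in>DD 6. of_bool (NAE (map x (g3 t)))) / real (card (DD 6))"
    unfolding R3_def C3_eq by (rule avg_DD[where g=g3 and m=6, OF g3_equiv]) (use n12 in auto)
  also have "\<dots> = (\<Sum>t\<in>DD 6. 1 - F3 t) / real (card (DD 6))"
    by (simp add: nae_g3 cong: sum.cong)
  also have "\<dots> = 1 - (\<Sum>t\<in>DD 6. F3 t) / real (card (DD 6))"
    using cD6 by (simp add: sum_subtractf field_simps)
  finally have R3a: "R3 = 1 - (\<Sum>t\<in>DD 6. F3 t) / real (card (DD 6))" .
  have e3: "(\<Sum>f\<in>AA 6. F3 f) / real (card (AA 6)) - 2 * 1 * real 6 ^ 2 / real n \<le> (\<Sum>t\<in>DD 6. F3 t) / real (card (DD 6))"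
    by (rule err_bound) (use n12 F3_bd in auto)
  have a3: "(\<Sum>f\<in>AA 6. F3 f) / real (card (AA 6)) = (1 - 3 * T2) / 4"
    unfolding sumF3 cA T2_def Q2_def[symmetric] N_def[symmetric] using N0
    by (simp add: field_simps power_eq_if)
  have R3b: "R3 \<le> 1 - (1 - 3 * T2) / 4 + 72 / real n" using R3a e3 a3 by simp
  have R5D: "R5 = (\<Sum>t\<in>DD 12. of_bool (NAE (map x (g5 t)))) / real (card (DD 12))"
    unfolding R5_def C5_eq by (rule avg_DD[where g=g5 and m=12, OF g5_equiv]) (use n12 in auto)
  also have "\<dots> = (\<Sum>t\<in>DD 12. 1 - (P5 1 t + P5 (-1) t) / 32) / real (card (DD 12))"
    by (simp add: nae_g5 cong: sum.cong)
  also have "\<dots> = (real (card (DD 12)) - (\<Sum>t\<in>DD 12. (P5 1 t + P5 (-1) t) / 32)) / real (card (DD 12))"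
    by (subst sum_subtractf) simp
  also have "\<dots> = 1 - (\<Sum>t\<in>DD 12. (P5 1 t + P5 (-1) t) / 32) / real (card (DD 12))"
    using cD12 by (simp add: diff_divide_distrib)
  finally have R5a: "R5 = 1 - (\<Sum>t\<in>DD 12. (P5 1 t + P5 (-1) t) / 32) / real (card (DD 12))" .
  have e5: "(\<Sum>f\<in>AA 12. (P5 1 f + P5 (-1) f) / 32) / real (card (AA 12)) - 2 * 2 * real 12 ^ 2 / real n
      \<le> (\<Sum>t\<in>DD 12. (P5 1 t + P5 (-1) t) / 32) / real (card (DD 12))"
    by (rule err_bound) (use n12 F5_bd in auto)
  have pw: "(N^2 + d)^4 + (N^2 + -1 * d)^4 = 2 * N^8 + 12 * N^4 * d^2 + 2 * d^4" for d
    by (simp add: power2_eq_square power4_eq_xxxx algebra_simps eval_nat_numeral)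
  have s5: "(\<Sum>f\<in>AA 12. (P5 1 f + P5 (-1) f) / 32) = N^3 * (2 * N^9 + 12 * N^4 * Q2 + 2 * Q4) / 32"
  proof -
    have "(\<Sum>f\<in>AA 12. (P5 1 f + P5 (-1) f) / 32) = ((\<Sum>f\<in>AA 12. P5 1 f) + (\<Sum>f\<in>AA 12. P5 (-1) f)) / 32"
      by (simp add: sum_divide_distrib[symmetric] sum.distrib)
    also have "\<dots> = N^3 * (\<Sum>a\<in>SS n. (N^2 + DS a)^4 + (N^2 + -1 * DS a)^4) / 32"
      unfolding sumP5 N_def[symmetric] by (simp add: sum.distrib algebra_simps)
    also have "\<dots> = N^3 * (\<Sum>a\<in>SS n. 2 * N^8 + 12 * N^4 * DS a^2 + 2 * DS a^4) / 32"
      by (simp only: pw)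
    also have "\<dots> = N^3 * (2 * N^9 + 12 * N^4 * Q2 + 2 * Q4) / 32"
      unfolding Q2_def Q4_def by (simp add: sum.distrib sum_distrib_left N_def[symmetric] power_eq_if)
    finally show ?thesis .
  qed
  have a5: "(\<Sum>f\<in>AA 12. (P5 1 f + P5 (-1) f) / 32) / real (card (AA 12)) = (1 + 6 * T2 + T4) / 16"
    unfolding s5 cA T2_def T4_def N_def[symmetric] using N0
    by (simp add: field_simps power_eq_if)
  have e5': "(1 + 6 * T2 + T4) / 16 - 576 / real n \<le> (\<Sum>t\<in>DD 12. (P5 1 t + P5 (-1) t) / 32) / real (card (DD 12))"
    using e5 a5 by simp
  have R5b: "R5 \<le> 1 - (1 + 6 * T2 + T2^2) / 16 + 576 / real n"
  proof -
    define Z where "Z = (\<Sum>t\<in>DD 12. (P5 1 t + P5 (-1) t) / 32) / real (card (DD 12))"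
    define W where "W = 576 / real n"
    have 1: "R5 = 1 - Z" using R5a unfolding Z_def .
    have 2: "(1 + 6 * T2 + T4) / 16 - W \<le> Z" using e5' unfolding Z_def W_def .
    have 3: "(1 + 6 * T2 + T2^2) / 16 \<le> (1 + 6 * T2 + T4) / 16" using T24 by simp
    show ?thesis using 1 2 3 unfolding W_def[symmetric] by linarith
  qed
  have s21: "3 \<le> sqrt 21" by (rule real_le_rsqrt) simp
  have w3: "0 \<le> 1 - 3 / sqrt 21" "1 - 3 / sqrt 21 \<le> 1" using s21 by (simp_all add: field_simps)
  have w5: "0 \<le> 3 / sqrt 21" "3 / sqrt 21 \<le> 1" using s21 by (simp_all add: field_simps)
  have "sat_weight n x \<le> (1 - 3 / sqrt 21) * (1 - (1 - 3 * T2) / 4 + 72 / real n)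
      + (3 / sqrt 21) * (1 - (1 + 6 * T2 + T2^2) / 16 + 576 / real n)"
    unfolding sw using R3b R5b w3 w5 by (intro add_mono mult_left_mono) auto
  also have "\<dots> = ((1 - 3 / sqrt 21) * (1 - (1 - 3 * T2) / 4) + (3 / sqrt 21) * (1 - (1 + 6 * T2 + T2^2) / 16))
      + ((1 - 3 / sqrt 21) * (72 / real n) + (3 / sqrt 21) * (576 / real n))"
    by (simp add: algebra_simps)
  also have "\<dots> \<le> 3 * (sqrt 21 - 4) / 2 + (1 * (700 / real n))"
  proof (rule add_mono[OF key])
    have "(1 - 3 / sqrt 21) * (72 / real n) \<le> 1 * (72 / real n)" using w3 n0 by (intro mult_right_mono) auto
    moreover have "(3 / sqrt 21) * (576 / real n) \<le> 1 * (576 / real n)" using w5 n0 by (intro mult_right_mono) auto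
    moreover have "72 / real n + 576 / real n \<le> 700 / real n" using n0 by (simp add: divide_right_mono flip: add_divide_distrib)
    ultimately show "(1 - 3 / sqrt 21) * (72 / real n) + (3 / sqrt 21) * (576 / real n) \<le> 1 * (700 / real n)" by simp
  qed
  finally show ?thesis by simp
qed

end

theorem mainTheorem7:
  shows "\<exists>C::real. C > 0 \<and> (\<exists>n0::nat. \<forall>n \<ge> n0. \<forall>x :: (nat \<Rightarrow> real) \<Rightarrow> real.
           (\<forall>v \<in> Vset n. x v \<in> {-1, 1} \<and> x (\<lambda>t. - v t) = - x v) \<longrightarrow>
           sat_weight n x \<le> 3 * (sqrt 21 - 4) / 2 + C / real n)"
proof (intro exI conjI allI impI)
  show "(700::real) > 0" by simp
  fix n :: nat and x :: "(nat \<Rightarrow> real) \<Rightarrow> real"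
  assume "n \<ge> 12" "\<forall>v \<in> Vset n. x v \<in> {-1, 1} \<and> x (\<lambda>t. - v t) = - x v"
  then show "sat_weight n x \<le> 3 * (sqrt 21 - 4) / 2 + 700 / real n"
    using asg.main_bound[of n x] unfolding asg_def by blast
qed


end
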